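(* Let $p,b$ be distinct primes and $a,c$ positive integers such that $c$ is a primitive divisor of $p^a-1$. If $b\mid p^a-1$ and $b\nmid\tfrac{p^a-1}{c}$, then $$g\Big(\tfrac{p^{ab}-1}{bc},\,p^{ab}\Big)=b\,g\Big(\tfrac{p^a-1}{c},\,p^a\Big).$$
   Context: For a prime power $q$ and a positive integer $k$, the Waring number $g(k,q)$ is the smallest $s$ (if it exists) such that every element of $\mathbb{F}_q$ is a sum of $s$ $k$-th powers of elements of $\mathbb{F}_q$. An integer $e$ is a primitive divisor of $p^a-1$ if $e\mid p^a-1$ and $e\nmid p^t-1$ for every $1\le t<a$. *)

theory Defs
  imports Main "HOL-Computational_Algebra.Primes"
begin

definition sum_of_kth_powers :: "nat \<Rightarrow> nat \<Rightarrow> 'a::field \<Rightarrow> bool" where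
  "sum_of_kth_powers s k y \<longleftrightarrow> (\<exists>xs::'a list. length xs = s \<and> y = sum_list (map (\<lambda>x. x ^ k) xs))"

text \<open>Waring number g(k,q) of the finite field of type 'a (with q = CARD('a));
  None if no such s exists.\<close>
definition waring_number :: "nat \<Rightarrow> 'a::{field,finite} itself \<Rightarrow> nat option" where
  "waring_number k _ =
     (if \<exists>s. \<forall>y::'a. sum_of_kth_powers s k y
      then Some (LEAST s. \<forall>y::'a. sum_of_kth_powers s k y)
      else None)"

definition primitive_divisor :: "nat \<Rightarrow> nat \<Rightarrow> nat \<Rightarrow> bool" where
  "primitive_divisor e p a \<longleftrightarrow> e dvd p ^ a - 1 \<and> (\<forall>t. 1 \<le> t \<and> t < a \<longrightarrow> \<not> e dvd p ^ t - 1)"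

end

theory Submission
  imports Defs "HOL-Algebra.Multiplicative_Group" "HOL-Computational_Algebra.Polynomial" "HOL-Number_Theory.Cong"
begin

definition tring :: "'a::field ring" where
  "tring = \<lparr> carrier = UNIV, monoid.mult = (\<lambda>x y. x * y), one = 1,
     ring.zero = 0, add = (\<lambda> x y. x + y) \<rparr>"

lemma field_tring: "field (tring :: 'a::field ring)"
proof -
  have "\<exists>y. x + y = 0" for x :: 'a
    using add.right_inverse by blast
  moreover have "x \<noteq> 0 \<Longrightarrow> \<exists>y. x * y = 1" for x :: 'a
    by (rule exI[of _ "inverse x"]) auto
  ultimately show ?thesis
    unfolding tring_def using add.right_inverse
    by unfold_locales (auto simp:algebra_simps Units_def)
qed

lemma ring_of_type_pow: "x [^]\<^bsub>(tring :: 'a::field ring)\<^esub> (n::nat) = x ^ n"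
  by (induction n) (auto simp: tring_def)

lemma gen_exists:
  "\<exists>g::'a::{field,finite}. (\<forall>x. x \<noteq> 0 \<longrightarrow> (\<exists>n. x = g ^ n)) \<and>
      (\<forall>n. g ^ n = 1 \<longleftrightarrow> (card (UNIV::'a set) - 1) dvd n)"
proof -
  let ?R = "tring :: 'a ring"
  interpret field ?R by (rule field_tring)
  have fin: "finite (carrier ?R)" by (simp add: tring_def)
  interpret G: group "mult_of ?R" by (rule field_mult_group)
  obtain g where g: "g \<in> carrier (mult_of ?R)"
     "carrier (mult_of ?R) = {g[^]\<^bsub>?R\<^esub>i | i::nat . i \<in> UNIV}"
    using finite_field_mult_group_has_gen[OF fin] by blast
  have cm: "carrier (mult_of ?R) = UNIV - {0}" by (simp add: tring_def)
  have gen: "\<forall>x. x \<noteq> 0 \<longrightarrow> (\<exists>n. x = g ^ n)"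
    using g(2) cm by (auto simp: ring_of_type_pow)
  have ordeq: "G.ord g = card (UNIV::'a set) - 1"
  proof -
    have "G.ord g = Coset.order (subgroup_generated (mult_of ?R) {g})"
      by (rule G.cyclic_order_is_ord[OF g(1)])
    also have "Coset.order (subgroup_generated (mult_of ?R) {g}) = Coset.order (mult_of ?R)"
    proof -
      have "generate (mult_of ?R) {g} = carrier (mult_of ?R)"
      proof
        show "generate (mult_of ?R) {g} \<subseteq> carrier (mult_of ?R)"
          using G.generate_incl g(1) by blast
        show "carrier (mult_of ?R) \<subseteq> generate (mult_of ?R) {g}"
        proof
          fix x assume "x \<in> carrier (mult_of ?R)"
          then obtain i::nat where "x = g [^]\<^bsub>?R\<^esub> i" using g(2) by auto
          hence "x = g [^]\<^bsub>mult_of ?R\<^esub> i" by (simp add: nat_pow_mult_of)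
          thus "x \<in> generate (mult_of ?R) {g}"
            using G.generate_pow[OF g(1)] by (auto intro!: exI[of _ "int i"] simp: int_pow_int)
        qed
      qed
      moreover have "carrier (mult_of ?R) \<inter> {g} = {g}" using g(1) by blast
      ultimately show ?thesis unfolding Coset.order_def carrier_subgroup_generated
        by simp
    qed
    also have "Coset.order (mult_of ?R) = card (UNIV::'a set) - 1"
      by (simp add: order_mult_of fin Coset.order_def tring_def)
    finally show ?thesis .
  qed
  have "\<forall>n. g ^ n = 1 \<longleftrightarrow> (card (UNIV::'a set) - 1) dvd n"
  proof
    fix n
    have "g [^]\<^bsub>mult_of ?R\<^esub> n = \<one>\<^bsub>mult_of ?R\<^esub> \<longleftrightarrow> G.ord g dvd n"
      by (rule G.pow_eq_id[OF g(1)])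
    thus "g ^ n = 1 \<longleftrightarrow> (card (UNIV::'a set) - 1) dvd n"
      by (simp add: nat_pow_mult_of ring_of_type_pow ordeq) (simp add: tring_def)
  qed
  with gen show ?thesis by blast
qed


lemma fermat_card: "(x::'a::{field,finite}) ^ card (UNIV::'a set) = x"
proof -
  obtain g :: 'a where g: "\<forall>x. x \<noteq> 0 \<longrightarrow> (\<exists>n. x = g ^ n)"
    "\<forall>n. g ^ n = 1 \<longleftrightarrow> (card (UNIV::'a set) - 1) dvd n"
    using gen_exists by blast
  have cpos: "card (UNIV::'a set) > 0" by (simp add: finite_UNIV_card_ge_0)
  show ?thesis
  proof (cases "x = 0")
    case True thus ?thesis using cpos by simp
  next
    case False
    then obtain n where n: "x = g ^ n" using g by blast
    have "x ^ (card (UNIV::'a set) - 1) = 1"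
      unfolding n power_mult[symmetric] using g(2) by simp
    hence "x ^ (card (UNIV::'a set) - 1) * x = x" by simp
    thus ?thesis using cpos
      by (metis Suc_diff_1 power_Suc2)
  qed
qed

lemma char_card:
  assumes "card (UNIV::'a::{field,finite} set) = p ^ n" "prime p" "n > 0"
  shows "CHAR('a) = p"
proof -
  have "(\<Sum>x\<in>(UNIV::'a set). x) = (\<Sum>x\<in>(UNIV::'a set). x + 1)"
    by (rule sum.reindex_bij_witness[of _ "\<lambda>x. x + 1" "\<lambda>x. x - 1"]) auto
  also have "\<dots> = (\<Sum>x\<in>(UNIV::'a set). x) + of_nat (card (UNIV::'a set))"
    by (simp add: sum.distrib)
  finally have "of_nat (card (UNIV::'a set)) = (0::'a)" by simp
  hence d0: "CHAR('a) dvd card (UNIV::'a set)" by (simp only: of_nat_eq_0_iff_char_dvd)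
  hence d: "CHAR('a) dvd p ^ n" by (simp only: assms(1))
  have "CHAR('a) > 0" by (rule finite_imp_CHAR_pos) simp
  hence pr: "prime CHAR('a)" using prime_CHAR_semidom by blast
  hence "CHAR('a) dvd p" using d prime_dvd_power by blast
  thus ?thesis using pr assms(2) primes_dvd_imp_eq by blast
qed


lemma sokp_mono:
  assumes "sum_of_kth_powers s k (y::'a::field)" "s \<le> s'" "0 < k"
  shows "sum_of_kth_powers s' k y"
proof -
  obtain xs :: "'a list" where xs: "length xs = s" "y = sum_list (map (\<lambda>x. x ^ k) xs)"
    using assms(1) unfolding sum_of_kth_powers_def by blast
  show ?thesis unfolding sum_of_kth_powers_def
    by (rule exI[of _ "xs @ replicate (s' - s) 0"]) (use xs assms in \<open>auto simp: power_0_left sum_list_replicate\<close>)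
qed

lemma sokp_add:
  assumes "sum_of_kth_powers s1 k (y1::'a::field)" "sum_of_kth_powers s2 k y2"
  shows "sum_of_kth_powers (s1 + s2) k (y1 + y2)"
proof -
  obtain xs :: "'a list" where xs: "length xs = s1" "y1 = sum_list (map (\<lambda>x. x ^ k) xs)"
    using assms(1) unfolding sum_of_kth_powers_def by blast
  obtain ys :: "'a list" where ys: "length ys = s2" "y2 = sum_list (map (\<lambda>x. x ^ k) ys)"
    using assms(2) unfolding sum_of_kth_powers_def by blast
  show ?thesis unfolding sum_of_kth_powers_def
    by (rule exI[of _ "xs @ ys"]) (use xs ys in auto)
qed

lemma sokp_list: "sum_of_kth_powers (length xs) k (sum_list (map (\<lambda>x. x ^ k) xs))"
  unfolding sum_of_kth_powers_def by blast

lemma waring_transfer: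
  fixes \<phi> :: "'F::{field,finite} \<Rightarrow> 'K::{field,finite}" and \<zeta> :: 'K and b k k' :: nat
  assumes add: "\<And>x y. \<phi> (x + y) = \<phi> x + \<phi> y" and zero: "\<phi> 0 = 0"
    and bpos: "b > 0" and kpos: "k > 0" and k'pos: "k' > 0"
    and H1: "\<And>y::'K. \<exists>i z. i < b \<and> y ^ k' = \<zeta> ^ i * \<phi> (z ^ k)"
    and H2: "\<And>i (z::'F). \<exists>y::'K. y ^ k' = \<zeta> ^ i * \<phi> (z ^ k)"
    and LI: "\<And>a::nat \<Rightarrow> 'F. (\<Sum>i<b. \<zeta> ^ i * \<phi> (a i)) = 0 \<Longrightarrow> \<forall>i<b. a i = 0"
    and SP: "\<And>y::'K. \<exists>a::nat \<Rightarrow> 'F. y = (\<Sum>i<b. \<zeta> ^ i * \<phi> (a i))"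
  shows "waring_number k' TYPE('K) = map_option (\<lambda>s. b * s) (waring_number k TYPE('F))"
proof -
  have diff: "\<phi> (x - y) = \<phi> x - \<phi> y" for x y
    using add[of "x - y" y] by (simp add: algebra_simps)
  have sumphi: "\<phi> (\<Sum>j\<in>A. f j) = (\<Sum>j\<in>A. \<phi> (f j))" for A :: "nat set" and f
    by (induction A rule: infinite_finite_induct) (auto simp: zero add)
  define PK where "PK s = (\<forall>y::'K. sum_of_kth_powers s k' y)" for s
  define PF where "PF t = (\<forall>x::'F. sum_of_kth_powers t k x)" for t
  have monoF: "PF t \<Longrightarrow> t \<le> t' \<Longrightarrow> PF t'" for t t'
    unfolding PF_def using sokp_mono kpos by blast
  have monoK: "PK t \<Longrightarrow> t \<le> t' \<Longrightarrow> PK t'" for t t'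
    unfolding PK_def using sokp_mono k'pos by blast
  have L1: "sum_of_kth_powers (length xs) k' (\<zeta> ^ i * \<phi> (sum_list (map (\<lambda>x. x ^ k) xs)))" for xs i
  proof (induction xs)
    case Nil
    show ?case unfolding sum_of_kth_powers_def by (auto simp: zero)
  next
    case (Cons x xs)
    obtain w where w: "w ^ k' = \<zeta> ^ i * \<phi> (x ^ k)" using H2 by blast
    have "sum_of_kth_powers 1 k' (\<zeta> ^ i * \<phi> (x ^ k))"
      unfolding sum_of_kth_powers_def by (rule exI[of _ "[w]"]) (simp add: w)
    from sokp_add[OF this Cons.IH] show ?case by (simp add: add distrib_left)
  qed
  have claim1: "PK (b * t)" if "PF t" for t
    unfolding PK_def
  proof
    fix y :: 'K
    obtain a where a: "y = (\<Sum>i<b. \<zeta> ^ i * \<phi> (a i))" using SP by blast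
    have each: "sum_of_kth_powers t k' (\<zeta> ^ i * \<phi> (a i))" for i
    proof -
      obtain xs where "length xs = t" "a i = sum_list (map (\<lambda>x. x ^ k) xs)"
        using \<open>PF t\<close> unfolding PF_def sum_of_kth_powers_def by blast
      thus ?thesis using L1[of xs i] by simp
    qed
    have "sum_of_kth_powers (n * t) k' (\<Sum>i<n. \<zeta> ^ i * \<phi> (a i))" for n
    proof (induction n)
      case 0 show ?case unfolding sum_of_kth_powers_def by auto
    next
      case (Suc n)
      from sokp_add[OF Suc.IH each[of n]] show ?case by (simp add: add.commute)
    qed
    thus "sum_of_kth_powers (b * t) k' y" using a by (simp add: mult.commute)
  qed
  have claim2: "PF (s div b)" if "PK s" for s
    unfolding PF_def
  proof
    fix x :: 'F
    define y where "y = (\<Sum>i<b. \<zeta> ^ i * \<phi> x)"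
    obtain ws where ws: "length ws = s" "y = sum_list (map (\<lambda>w. w ^ k') ws)"
      using \<open>PK s\<close> unfolding PK_def sum_of_kth_powers_def by blast
    have h: "\<forall>j. \<exists>i z. i < b \<and> (ws ! j) ^ k' = \<zeta> ^ i * \<phi> (z ^ k)" using H1 by blast
    obtain I where hI: "\<forall>j. \<exists>z. I j < b \<and> (ws ! j) ^ k' = \<zeta> ^ (I j) * \<phi> (z ^ k)"
      using choice[OF h] by blast
    obtain Z where IZ: "\<forall>j. I j < b \<and> (ws ! j) ^ k' = \<zeta> ^ (I j) * \<phi> ((Z j) ^ k)"
      using choice[OF hI] by blast
    define J where "J i = {j \<in> {..<s}. I j = i}" for i
    define X where "X i = (\<Sum>j\<in>J i. Z j ^ k)" for i
    have "y = (\<Sum>j<s. (ws ! j) ^ k')"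
      using ws by (simp add: sum_list_sum_nth atLeast0LessThan)
    also have "\<dots> = (\<Sum>j<s. \<zeta> ^ (I j) * \<phi> ((Z j) ^ k))"
      using IZ by simp
    also have "\<dots> = (\<Sum>i<b. (\<Sum>j\<in>J i. \<zeta> ^ (I j) * \<phi> ((Z j) ^ k)))"
      unfolding J_def by (rule sum.group[symmetric]) (use IZ in auto)
    also have "\<dots> = (\<Sum>i<b. \<zeta> ^ i * \<phi> (X i))"
      unfolding X_def by (intro sum.cong refl) (auto simp: J_def sumphi sum_distrib_left)
    finally have yX: "y = (\<Sum>i<b. \<zeta> ^ i * \<phi> (X i))" .
    have "(\<Sum>i<b. \<zeta> ^ i * \<phi> (x - X i)) = y - (\<Sum>i<b. \<zeta> ^ i * \<phi> (X i))"
      unfolding y_def by (simp add: diff right_diff_distrib sum_subtractf)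
    also have "\<dots> = 0" using yX by simp
    finally have "\<forall>i<b. x - X i = 0" by (rule LI)
    hence xX: "\<forall>i<b. x = X i" by simp
    have cardsum: "(\<Sum>i<b. card (J i)) = s"
    proof -
      have "(\<Sum>i<b. card (J i)) = (\<Sum>i<b. (\<Sum>j\<in>J i. (1::nat)))" by simp
      also have "\<dots> = (\<Sum>j<s. (1::nat))"
        unfolding J_def by (rule sum.group) (use IZ in auto)
      finally show ?thesis by simp
    qed
    have "\<exists>i<b. b * card (J i) \<le> s"
    proof (rule ccontr)
      assume "\<not> ?thesis"
      hence "\<forall>i<b. s + 1 \<le> b * card (J i)" by auto
      hence "(\<Sum>i<b. s + 1) \<le> (\<Sum>i<b. b * card (J i))" by (intro sum_mono) auto
      also have "\<dots> = b * s" using cardsum by (simp flip: sum_distrib_left)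
      finally show False using bpos by simp
    qed
    then obtain i0 where i0: "i0 < b" "b * card (J i0) \<le> s" by blast
    have finJ: "finite (J i0)" unfolding J_def by simp
    define l where "l = map Z (sorted_list_of_set (J i0))"
    have "x = sum_list (map (\<lambda>z. z ^ k) l)"
      using xX i0(1) finJ unfolding l_def X_def
      by (simp add: sum_list_distinct_conv_sum_set o_def)
    hence "sum_of_kth_powers (length l) k x" using sokp_list by metis
    moreover have "length l = card (J i0)" unfolding l_def by simp
    moreover have "card (J i0) \<le> s div b"
    proof -
      have "(b * card (J i0)) div b \<le> s div b" using i0(2) by (rule div_le_mono)
      thus ?thesis using bpos by simp
    qed
    ultimately show "sum_of_kth_powers (s div b) k x" using sokp_mono kpos by metis
  qed
  have equiv: "PK s \<longleftrightarrow> PF (s div b)" for s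
  proof
    assume "PF (s div b)"
    hence "PK (b * (s div b))" by (rule claim1)
    thus "PK s" by (rule monoK) (simp add: mult.commute)
  qed (rule claim2)
  show ?thesis
  proof (cases "\<exists>t. PF t")
    case True
    define t0 where "t0 = (LEAST t. PF t)"
    have t0: "PF t0" unfolding t0_def using True by (rule LeastI_ex)
    have t0le: "PF t \<Longrightarrow> t0 \<le> t" for t unfolding t0_def by (rule Least_le)
    have "PK (b * t0)" using equiv[of "b * t0"] t0 bpos by simp
    hence exK: "\<exists>s. PK s" by blast
    have "(LEAST s. PK s) = b * t0"
    proof (rule Least_equality)
      show "PK (b * t0)" by fact
      fix s assume "PK s"
      hence "t0 \<le> s div b" using equiv t0le by blast
      hence "b * t0 \<le> b * (s div b)" by simp
      also have "\<dots> \<le> s" by simp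
      finally show "b * t0 \<le> s" .
    qed
    thus ?thesis using True exK unfolding waring_number_def PK_def[symmetric] PF_def[symmetric] t0_def
      by simp
  next
    case False
    hence "\<not> (\<exists>s. PK s)" using equiv by blast
    thus ?thesis using False unfolding waring_number_def PK_def[symmetric] PF_def[symmetric]
      by simp
  qed
qed


definition ev :: "'a::comm_ring_1 \<Rightarrow> int poly \<Rightarrow> 'a" where
  "ev x P = poly (map_poly of_int P) x"

lemma map_of_int_add: "map_poly (of_int::int\<Rightarrow>'a::comm_ring_1) (P + Q) = map_poly of_int P + map_poly of_int Q"
  by (rule poly_eqI) (simp add: coeff_map_poly)

lemma map_of_int_diff: "map_poly (of_int::int\<Rightarrow>'a::comm_ring_1) (P - Q) = map_poly of_int P - map_poly of_int Q"
  by (rule poly_eqI) (simp add: coeff_map_poly)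

lemma map_of_int_mult: "map_poly (of_int::int\<Rightarrow>'a::comm_ring_1) (P * Q) = map_poly of_int P * map_poly of_int Q"
  by (rule poly_eqI) (simp add: coeff_map_poly coeff_mult)

lemma ev_add: "ev x (P + Q) = ev x P + ev x Q"
  by (simp add: ev_def map_of_int_add)
lemma ev_diff: "ev x (P - Q) = ev x P - ev x Q"
  by (simp add: ev_def map_of_int_diff)
lemma ev_mult: "ev x (P * Q) = ev x P * ev x Q"
  by (simp add: ev_def map_of_int_mult)
lemma ev_one: "ev x 1 = 1"
  by (simp add: ev_def)
lemma ev_zero: "ev x 0 = 0"
  by (simp add: ev_def)
lemma ev_monom: "ev x (monom 1 n) = x ^ n"
  by (simp add: ev_def map_poly_monom poly_monom)

lemma poly_sum_le:
  fixes x :: "'a::comm_ring_1"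
  assumes "degree p \<le> n"
  shows "poly p x = (\<Sum>i\<le>n. coeff p i * x ^ i)"
proof -
  have "poly p x = (\<Sum>i\<le>degree p. coeff p i * x ^ i)" by (rule Polynomial.poly_altdef)
  also have "\<dots> = (\<Sum>i\<le>n. coeff p i * x ^ i)"
    by (rule sum.mono_neutral_left) (use assms in \<open>auto simp: coeff_eq_0\<close>)
  finally show ?thesis .
qed

lemma ev_sum:
  assumes "degree P \<le> n"
  shows "ev x P = (\<Sum>i\<le>n. of_int (coeff P i) * x ^ i)"
proof -
  have "degree (map_poly (of_int::int\<Rightarrow>'a) P) \<le> n"
    by (rule le_trans[OF map_poly_degree_leq assms])
  thus ?thesis unfolding ev_def by (simp add: poly_sum_le coeff_map_poly)
qed

lemma ev_kill:
  assumes "\<forall>i. int CHAR('a) dvd coeff P i"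
  shows "ev (x::'a::comm_ring_1) P = 0"
proof -
  have "\<forall>i. of_int (coeff P i) = (0::'a)" using assms by (simp add: of_int_eq_0_iff_char_dvd)
  thus ?thesis using ev_sum[of P "degree P" x] by simp
qed


lemma embed:
  fixes p q :: nat
  assumes pp: "prime p" and cF: "CHAR('F::{field,finite}) = p" and cK: "CHAR('K::{field,finite}) = p"
    and qF: "card (UNIV::'F set) = q" and qK: "q \<le> card {z::'K. z ^ q = z}"
  shows "\<exists>\<phi>::'F \<Rightarrow> 'K. (\<forall>x y. \<phi> (x + y) = \<phi> x + \<phi> y) \<and> (\<forall>x y. \<phi> (x * y) = \<phi> x * \<phi> y)
           \<and> \<phi> 1 = 1 \<and> inj \<phi>"
proof -
  obtain \<alpha> :: 'F where \<alpha>: "\<forall>x. x \<noteq> 0 \<longrightarrow> (\<exists>n. x = \<alpha> ^ n)" using gen_exists by blast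
  have "card {0::'F, 1} \<le> card (UNIV::'F set)" by (rule card_mono) auto
  hence q2: "q \<ge> 2" using qF by simp
  have surj: "\<exists>P. ev \<alpha> P = x" for x :: 'F
  proof (cases "x = 0")
    case True thus ?thesis using ev_zero by blast
  next
    case False
    then obtain n where "x = \<alpha> ^ n" using \<alpha> by blast
    thus ?thesis using ev_monom by blast
  qed
  define Xq :: "int poly" where "Xq = monom 1 q - monom 1 1"
  have coeffXq: "coeff Xq i = (if i = q then 1 else if i = 1 then -1 else 0)" for i
    using q2 by (simp add: Xq_def coeff_monom)
  have degXq: "degree Xq = q"
  proof (rule le_antisym)
    show "degree Xq \<le> q" by (rule degree_le) (use q2 in \<open>auto simp: coeffXq\<close>)
    show "q \<le> degree Xq" by (rule le_degree) (simp add: coeffXq)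
  qed
  have evXq: "ev x Xq = x ^ q - x" for x :: "'b::comm_ring_1"
    by (simp add: Xq_def ev_diff ev_monom)
  have XqF: "ev \<alpha> Xq = 0" using fermat_card[of \<alpha>] qF by (simp add: evXq)
  define M where "M = {g::int poly. lead_coeff g = 1 \<and> ev \<alpha> g = 0}"
  have XqM: "Xq \<in> M" unfolding M_def using XqF degXq coeffXq by simp
  define d0 where "d0 = (LEAST d. \<exists>g\<in>M. degree g = d)"
  have "\<exists>g\<in>M. degree g = d0" unfolding d0_def by (rule LeastI_ex) (use XqM in blast)
  then obtain f where fM: "f \<in> M" and fd: "degree f = d0" by blast
  have fmin: "degree f \<le> degree g" if "g \<in> M" for g
    unfolding fd d0_def by (rule Least_le) (use that in blast)
  have flc: "lead_coeff f = 1" and f\<alpha>: "ev \<alpha> f = 0" using fM unfolding M_def by auto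
  have fne: "f \<noteq> 0" using flc by auto
  have degf: "degree f \<ge> 1"
  proof (rule ccontr)
    assume "\<not> ?thesis"
    hence "degree f = 0" by simp
    hence "f = [:coeff f 0:]" using degree_0_id[of f] by metis
    hence "f = 1" using flc \<open>degree f = 0\<close> by (simp add: one_pCons)
    thus False using f\<alpha> by (simp add: ev_one)
  qed
  have divide: "\<exists>Q R. P = f * Q + R \<and> (R = 0 \<or> degree R < degree f)" for P
  proof -
    obtain Q R where qr: "pseudo_divmod P f = (Q, R)" by (cases "pseudo_divmod P f") auto
    from pseudo_divmod[OF fne qr] flc show ?thesis by auto
  qed
  have reduce: "\<forall>i. int p dvd coeff R i" if Rd: "degree R < degree f" and R\<alpha>: "ev \<alpha> R = 0" for R
  proof (rule ccontr)
    assume nd: "\<not> (\<forall>i. int p dvd coeff R i)"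
    define S where "S = {i. \<not> int p dvd coeff R i}"
    have Sne: "S \<noteq> {}" using nd S_def by auto
    have Ssub: "S \<subseteq> {..degree R}"
    proof
      fix i assume "i \<in> S"
      hence "coeff R i \<noteq> 0" unfolding S_def by auto
      thus "i \<in> {..degree R}" using le_degree by auto
    qed
    have finS: "finite S" using Ssub finite_subset by blast
    define d where "d = Max S"
    have dS: "d \<in> S" unfolding d_def using finS Sne by (rule Max_in)
    have dmax: "i \<le> d" if "i \<in> S" for i unfolding d_def using finS that by (rule Max_ge)
    have dR: "d \<le> degree R" using dS Ssub by auto
    define c0 where "c0 = coeff R d"
    have c0F: "of_int c0 \<noteq> (0::'F)" using dS cF unfolding S_def c0_def
      by (simp add: of_int_eq_0_iff_char_dvd)
    define u where "u = c0 ^ (q - 2)"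
    have uc0: "of_int u * of_int c0 = (1::'F)"
    proof -
      have "(of_int c0::'F) ^ q = of_int c0" using fermat_card qF by metis
      moreover have "(of_int c0::'F) ^ q = (of_int c0) ^ (q - 2) * of_int c0 * of_int c0"
        using q2 by (metis (no_types, lifting) add_2_eq_Suc' le_add_diff_inverse2 mult.assoc power_Suc2)
      ultimately have "(of_int c0::'F) ^ (q - 2) * of_int c0 * of_int c0 = 1 * of_int c0" by simp
      hence "(of_int c0::'F) ^ (q - 2) * of_int c0 = 1" using c0F by (metis mult_right_cancel)
      thus ?thesis unfolding u_def by simp
    qed
    define g :: "int poly" where "g = monom 1 d + (\<Sum>i<d. monom (u * coeff R i) i)"
    have coeffg: "coeff g n = (if n = d then 1 else if n < d then u * coeff R n else 0)" for n
      unfolding g_def by (auto simp: coeff_sum coeff_monom)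
    have degg: "degree g = d"
    proof (rule le_antisym)
      show "degree g \<le> d" by (rule degree_le) (auto simp: coeffg)
      show "d \<le> degree g" by (rule le_degree) (simp add: coeffg)
    qed
    have lcg: "lead_coeff g = 1" using degg by (simp add: coeffg)
    have "ev \<alpha> R = (\<Sum>i\<le>degree R. of_int (coeff R i) * \<alpha> ^ i)" by (rule ev_sum) simp
    also have "\<dots> = (\<Sum>i\<le>d. of_int (coeff R i) * \<alpha> ^ i)"
    proof (rule sum.mono_neutral_right)
      show "\<forall>i\<in>{..degree R} - {..d}. of_int (coeff R i) * \<alpha> ^ i = 0"
      proof
        fix i assume "i \<in> {..degree R} - {..d}"
        hence "i \<notin> S" using dmax by force
        hence "of_int (coeff R i) = (0::'F)" using cF unfolding S_def
          by (simp add: of_int_eq_0_iff_char_dvd)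
        thus "of_int (coeff R i) * \<alpha> ^ i = 0" by simp
      qed
    qed (use dR in auto)
    finally have evR: "ev \<alpha> R = (\<Sum>i\<le>d. of_int (coeff R i) * \<alpha> ^ i)" .
    have "ev \<alpha> g = (\<Sum>i\<le>d. of_int (coeff g i) * \<alpha> ^ i)" by (rule ev_sum) (simp add: degg)
    also have "\<dots> = (\<Sum>i\<le>d. of_int u * (of_int (coeff R i) * \<alpha> ^ i))"
    proof (rule sum.cong)
      fix i assume "i \<in> {..d}"
      thus "of_int (coeff g i) * \<alpha> ^ i = of_int u * (of_int (coeff R i) * \<alpha> ^ i)"
        using uc0 by (cases "i = d") (auto simp: coeffg c0_def mult.assoc)
    qed simp
    also have "\<dots> = of_int u * ev \<alpha> R" by (simp add: evR sum_distrib_left)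
    also have "\<dots> = 0" using R\<alpha> by simp
    finally have "g \<in> M" unfolding M_def using lcg by simp
    hence "degree f \<le> d" using fmin degg by metis
    thus False using dR Rd by simp
  qed
  have remainder: "\<exists>Q R. P = f * Q + R \<and> (\<forall>i. int p dvd coeff R i)" if "ev \<alpha> P = 0" for P
  proof -
    obtain Q R where QR: "P = f * Q + R" "R = 0 \<or> degree R < degree f" using divide by blast
    have "ev \<alpha> R = 0" using that QR(1) f\<alpha> by (simp add: ev_add ev_mult)
    hence "\<forall>i. int p dvd coeff R i" using QR(2) reduce by auto
    thus ?thesis using QR(1) by blast
  qed
  have transfer: "ev z P = 0" if tz: "ev z f = 0" and tP: "ev \<alpha> P = 0" for z :: 'K and P
  proof -
    obtain Q R where QR: "P = f * Q + R" "\<forall>i. int p dvd coeff R i" using remainder tP by blast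
    have "ev z R = 0" using QR(2) cK by (intro ev_kill) simp
    thus ?thesis using QR(1) tz by (simp add: ev_add ev_mult)
  qed
  have "\<exists>\<beta>::'K. ev \<beta> f = 0"
  proof (rule ccontr)
    assume noroot: "\<not> ?thesis"
    obtain Q R where QR: "Xq = f * Q + R" "\<forall>i. int p dvd coeff R i" using remainder XqF by blast
    define mX where "mX = map_poly (of_int :: int \<Rightarrow> 'K) Xq"
    define mf where "mf = map_poly (of_int :: int \<Rightarrow> 'K) f"
    define mQ where "mQ = map_poly (of_int :: int \<Rightarrow> 'K) Q"
    have mR: "map_poly (of_int :: int \<Rightarrow> 'K) R = 0"
      by (rule poly_eqI) (use QR(2) cK in \<open>simp add: coeff_map_poly of_int_eq_0_iff_char_dvd\<close>)
    have mXfQ: "mX = mf * mQ" unfolding mX_def mf_def mQ_def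
      by (subst QR(1)) (simp add: map_of_int_add map_of_int_mult mR)
    have cmX: "coeff mX q = 1" unfolding mX_def by (simp add: coeff_map_poly coeffXq)
    have mQne: "mQ \<noteq> 0" using cmX mXfQ by auto
    have degmf: "degree mf = degree f" unfolding mf_def
      by (rule map_poly_degree_eq) (simp add: flc)
    have mfne: "mf \<noteq> 0" using degmf degf by auto
    have "degree mX \<le> q" unfolding mX_def using map_poly_degree_leq[of of_int Xq] degXq by simp
    hence "degree mf + degree mQ \<le> q" using mXfQ degree_mult_eq[OF mfne mQne] by simp
    hence dQ: "degree mQ < q" using degmf degf by simp
    have sub: "{z::'K. z ^ q = z} \<subseteq> {z. poly mQ z = 0}"
    proof
      fix z :: 'K assume "z \<in> {z. z ^ q = z}"
      hence "poly mX z = 0" unfolding mX_def using evXq[of z] by (simp add: ev_def)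
      hence "poly mf z * poly mQ z = 0" using mXfQ by simp
      moreover have "poly mf z \<noteq> 0" using noroot unfolding mf_def ev_def by blast
      ultimately show "z \<in> {z. poly mQ z = 0}" by simp
    qed
    have "card {z::'K. z ^ q = z} \<le> card {z. poly mQ z = 0}"
      by (rule card_mono[OF poly_roots_finite[OF mQne] sub])
    also have "\<dots> \<le> degree mQ" by (rule card_poly_roots_bound[OF mQne])
    finally show False using qK dQ by simp
  qed
  then obtain \<beta> :: 'K where \<beta>: "ev \<beta> f = 0" by blast
  define \<phi> where "\<phi> x = ev \<beta> (SOME P. ev \<alpha> P = x)" for x
  have \<phi>ev: "\<phi> (ev \<alpha> P) = ev \<beta> P" for P
  proof -
    define P' where "P' = (SOME P'. ev \<alpha> P' = ev \<alpha> P)"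
    have "ev \<alpha> P' = ev \<alpha> P" unfolding P'_def by (rule someI_ex) blast
    hence "ev \<alpha> (P' - P) = 0" by (simp add: ev_diff)
    hence "ev \<beta> (P' - P) = 0" using transfer \<beta> by blast
    hence "ev \<beta> P' = ev \<beta> P" by (simp add: ev_diff)
    thus ?thesis unfolding \<phi>_def P'_def by simp
  qed
  have hadd: "\<phi> (x + y) = \<phi> x + \<phi> y" for x y
  proof -
    obtain P Q where "x = ev \<alpha> P" "y = ev \<alpha> Q" using surj by metis
    thus ?thesis using \<phi>ev[of "P + Q"] by (simp add: ev_add \<phi>ev)
  qed
  have hmult: "\<phi> (x * y) = \<phi> x * \<phi> y" for x y
  proof -
    obtain P Q where "x = ev \<alpha> P" "y = ev \<alpha> Q" using surj by metis
    thus ?thesis using \<phi>ev[of "P * Q"] by (simp add: ev_mult \<phi>ev)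
  qed
  have hone: "\<phi> 1 = 1" using \<phi>ev[of 1] by (simp add: ev_one)
  have hdiff: "\<phi> (x - y) = \<phi> x - \<phi> y" for x y
    using hadd[of "x - y" y] by (simp add: algebra_simps)
  have "inj \<phi>"
  proof (rule injI)
    fix x y assume "\<phi> x = \<phi> y"
    hence z: "\<phi> (x - y) = 0" by (simp add: hdiff)
    show "x = y"
    proof (rule ccontr)
      assume "x \<noteq> y"
      hence "(x - y) * inverse (x - y) = 1" by simp
      hence "\<phi> (x - y) * \<phi> (inverse (x - y)) = 1" using hmult hone by metis
      thus False using z by simp
    qed
  qed
  thus ?thesis using hadd hmult hone by blast
qed


lemma nt_geo: "(q::nat) \<ge> 1 \<Longrightarrow> q ^ n - 1 = (q - 1) * (\<Sum>i<n. q ^ i)"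
proof -
  assume q: "q \<ge> 1"
  have "int (q ^ n - 1) = int q ^ n - 1" using q by (simp add: of_nat_diff)
  also have "\<dots> = (int q - 1) * (\<Sum>i<n. int q ^ i)" by (rule power_diff_1_eq)
  also have "\<dots> = int ((q - 1) * (\<Sum>i<n. q ^ i))" using q by (simp add: of_nat_diff)
  finally show ?thesis by (simp only: of_nat_eq_iff)
qed

lemma nt_bS:
  assumes "(b::nat) > 1" "b dvd q - 1" "q \<ge> 1"
  shows "b dvd (\<Sum>i<b. q ^ i)"
proof -
  obtain t where t: "q - 1 = b * t" using assms(2) by blast
  hence "q = 1 + b * t" using assms(3) by simp
  hence qm: "q mod b = 1" using assms(1) by (simp only: mod_mult_self2) simp
  have pm: "q ^ i mod b = 1" for i
  proof -
    have "q ^ i mod b = (q mod b) ^ i mod b" by (simp add: power_mod)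
    thus ?thesis using qm assms(1) by simp
  qed
  have "(\<Sum>i<b. q ^ i) mod b = (\<Sum>i<b. q ^ i mod b) mod b" by (simp add: mod_sum_eq)
  also have "\<dots> = 0" by (simp add: pm)
  finally show ?thesis by (simp add: mod_eq_0_iff_dvd)
qed

lemma nt_order:
  fixes q M b j l :: nat
  assumes "prime b" "[q ^ b = 1] (mod M)" "j < l" "l < b" "[q ^ j = q ^ l] (mod M)"
  shows "[q = 1] (mod M)"
proof -
  have "coprime (1::nat) M" by simp
  hence "coprime (q ^ b) M" using cong_imp_coprime[OF cong_sym[OF assms(2)]] by blast
  hence cq: "coprime q M" using assms(1) prime_gt_0_nat by (simp add: coprime_power_left_iff)
  define d where "d = l - j"
  have d0: "d > 0" "d < b" using assms(3,4) by (auto simp: d_def)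
  have "q ^ l = q ^ j * q ^ d" using assms(3) by (simp add: d_def flip: power_add)
  hence "[q ^ j * 1 = q ^ j * q ^ d] (mod M)" using assms(5) by simp
  hence qd: "[1 = q ^ d] (mod M)"
    using cong_mult_lcancel_nat[of "q ^ j" M 1 "q ^ d"] cq by (simp add: coprime_power_left_iff)
  have "\<not> b dvd d" using d0 by (auto dest: dvd_imp_le)
  hence "coprime b d" using assms(1) by (simp add: prime_imp_coprime)
  hence "gcd d b = 1" by (simp add: coprime_iff_gcd_eq_1 gcd.commute)
  then obtain x y where xy: "d * x = b * y + 1" using bezout_nat[of d b] d0 by auto
  have "[(q ^ d) ^ x = 1 ^ x] (mod M)" using cong_pow[OF cong_sym[OF qd]] .
  moreover have "(q ^ d) ^ x = q ^ (b * y) * q" by (metis xy power_mult power_Suc2 Suc_eq_plus1)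
  ultimately have c1: "[q ^ (b * y) * q = 1] (mod M)" by simp
  have "[(q ^ b) ^ y = 1 ^ y] (mod M)" using cong_pow[OF assms(2)] .
  hence "[q ^ (b * y) * q = 1 * q] (mod M)" by (intro cong_mult) (auto simp: power_mult)
  thus ?thesis using c1 by (metis cong_sym cong_trans mult_1)
qed


lemma pow_eq_mod:
  fixes \<gamma> :: "'a::field"
  assumes ord: "\<forall>n. \<gamma> ^ n = 1 \<longleftrightarrow> N dvd n" and nz: "\<gamma> \<noteq> 0"
  shows "\<gamma> ^ i = \<gamma> ^ j \<longleftrightarrow> i mod N = j mod N"
proof -
  have aux: "\<gamma> ^ i = \<gamma> ^ j \<longleftrightarrow> i mod N = j mod N" if ij: "i \<le> j" for i j
  proof -
    have "\<gamma> ^ j = \<gamma> ^ i * \<gamma> ^ (j - i)" using ij by (simp flip: power_add)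
    hence "\<gamma> ^ i = \<gamma> ^ j \<longleftrightarrow> \<gamma> ^ (j - i) = 1" using nz by auto
    also have "\<dots> \<longleftrightarrow> N dvd j - i" using ord by blast
    also have "\<dots> \<longleftrightarrow> i mod N = j mod N" using mod_eq_dvd_iff_nat[OF ij, of N] by auto
    finally show ?thesis .
  qed
  show ?thesis
  proof (cases "i \<le> j")
    case True thus ?thesis by (rule aux)
  next
    case False
    hence "j \<le> i" by simp
    from aux[OF this] show ?thesis by auto
  qed
qed


theorem mainTheorem6:
  fixes p b a c :: nat
  assumes "prime p" and "prime b" and "p \<noteq> b"
    and "a > 0" and "c > 0"
    and "primitive_divisor c p a"
    and "b dvd p ^ a - 1" and "\<not> b dvd (p ^ a - 1) div c"
    and "card (UNIV :: 'F::{field,finite} set) = p ^ a"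
    and "card (UNIV :: 'K::{field,finite} set) = p ^ (a * b)"
  shows "waring_number ((p ^ (a * b) - 1) div (b * c)) TYPE('K)
         = map_option (\<lambda>s. b * s) (waring_number ((p ^ a - 1) div c) TYPE('F))"
proof -
  define q where "q = p ^ a"
  have p2: "p \<ge> 2" using assms(1) prime_ge_2_nat by blast
  have b2: "b \<ge> 2" using assms(2) prime_ge_2_nat by blast
  have "p ^ 1 \<le> p ^ a" by (rule power_increasing) (use assms(4) p2 in auto)
  hence q2: "q \<ge> 2" using p2 unfolding q_def by simp
  have cF: "card (UNIV::'F set) = q" using assms(9) q_def by simp
  have cK: "card (UNIV::'K set) = q ^ b" using assms(10) by (simp add: q_def power_mult)
  have charF: "CHAR('F) = p" by (rule char_card[OF assms(9) assms(1) assms(4)])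
  have charK: "CHAR('K) = p" by (rule char_card[OF assms(10) assms(1)]) (use assms(4) b2 in simp)
  have cdvd: "c dvd q - 1" using assms(6) by (simp add: primitive_divisor_def q_def)
  have bdvd: "b dvd q - 1" using assms(7) q_def by simp
  have nbk: "\<not> b dvd (q - 1) div c" using assms(8) q_def by simp
  define N where "N = q ^ b - 1"
  define S where "S = (\<Sum>i<b. q ^ i)"
  have NS: "N = (q - 1) * S" unfolding N_def S_def by (rule nt_geo) (use q2 in simp)
  have bS: "b dvd S" unfolding S_def by (rule nt_bS) (use b2 bdvd q2 in auto)
  have bcN: "b * c dvd N" using NS bS cdvd by (metis mult.commute mult_dvd_mono)
  define k where "k = (q - 1) div c"
  have kc: "k * c = q - 1" unfolding k_def using cdvd by simp
  define k' where "k' = N div (b * c)"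
  have k'bc: "k' * (b * c) = N" unfolding k'_def using bcN by simp
  have "1 < q ^ b" using q2 b2 by (intro one_less_power) auto
  hence Npos: "N > 0" unfolding N_def by simp
  have qm1: "q - 1 > 0" using q2 by simp
  have kpos: "k > 0" using kc qm1 by (cases k) auto
  have k'pos: "k' > 0" using k'bc Npos by (cases k') auto
  have Spos: "S > 0" using NS Npos by (cases S) auto
  have mk: "S * k = b * k'"
  proof -
    have "(S * k) * c = (b * k') * c" using kc k'bc NS by (simp add: mult.assoc mult.commute mult.left_commute)
    thus ?thesis using assms(5) by simp
  qed
  obtain \<gamma> :: 'K where \<gamma>gen: "\<forall>x. x \<noteq> 0 \<longrightarrow> (\<exists>n. x = \<gamma> ^ n)"
      and \<gamma>ord: "\<forall>n. \<gamma> ^ n = 1 \<longleftrightarrow> N dvd n"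
    using gen_exists[where 'a='K] cK N_def by auto
  have \<gamma>nz: "\<gamma> \<noteq> 0"
  proof
    assume "\<gamma> = 0"
    moreover have "\<gamma> ^ N = 1" using \<gamma>ord by simp
    ultimately show False using Npos by (simp add: power_0_left)
  qed
  have peq: "\<gamma> ^ i = \<gamma> ^ j \<longleftrightarrow> i mod N = j mod N" for i j
    by (rule pow_eq_mod[OF \<gamma>ord \<gamma>nz])
  define Rq where "Rq = {z::'K. z ^ q = z}"
  have Rq_char: "\<exists>j. z = \<gamma> ^ (S * j)" if zR: "z \<in> Rq" and zn: "z \<noteq> 0" for z
  proof -
    obtain n where n: "z = \<gamma> ^ n" using \<gamma>gen zn by blast
    have "\<gamma> ^ (n * q) = \<gamma> ^ n" using zR unfolding Rq_def n by (simp add: power_mult)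
    hence "(n * q) mod N = n mod N" using peq by blast
    moreover have "n \<le> n * q" using q2 by simp
    ultimately have "N dvd n * q - n" using mod_eq_dvd_iff_nat by blast
    moreover have "n * q - n = n * (q - 1)" by (simp add: diff_mult_distrib2)
    ultimately have "(q - 1) * S dvd (q - 1) * n" using NS by (simp add: mult.commute)
    hence "S dvd n" using qm1 by simp
    then obtain j where "n = S * j" by blast
    thus ?thesis using n by blast
  qed
  have Rq_in: "\<gamma> ^ (S * j) \<in> Rq" for j
  proof -
    have "(S * j * q) mod N = (S * j) mod N"
    proof -
      have "S * j \<le> S * j * q" using q2 by simp
      moreover have "S * j * q - S * j = N * j" using NS by (simp add: diff_mult_distrib2 mult.commute mult.left_commute)
      ultimately show ?thesis using mod_eq_dvd_iff_nat by simp
    qed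
    hence "\<gamma> ^ (S * j * q) = \<gamma> ^ (S * j)" using peq by blast
    thus ?thesis unfolding Rq_def by (simp add: power_mult)
  qed
  have Rq_eq: "Rq = insert 0 ((\<lambda>j. \<gamma> ^ (S * j)) ` {..<q - 1})"
  proof
    show "Rq \<subseteq> insert 0 ((\<lambda>j. \<gamma> ^ (S * j)) ` {..<q - 1})"
    proof
      fix z assume z: "z \<in> Rq"
      show "z \<in> insert 0 ((\<lambda>j. \<gamma> ^ (S * j)) ` {..<q - 1})"
      proof (cases "z = 0")
        case False
        then obtain j where j: "z = \<gamma> ^ (S * j)" using Rq_char z by blast
        have "(S * j) mod N = (S * (j mod (q - 1))) mod N"
        proof -
          have NS': "N = S * (q - 1)" using NS by simp
          have "(S * j) mod N = S * (j mod (q - 1))" unfolding NS' by (rule mod_mult_mult1)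
          moreover have "j mod (q - 1) < q - 1" using qm1 by simp
          hence "S * (j mod (q - 1)) < S * (q - 1)" using Spos by simp
          hence "S * (j mod (q - 1)) < N" using NS' by simp
          ultimately show ?thesis by simp
        qed
        hence "z = \<gamma> ^ (S * (j mod (q - 1)))" using j peq by blast
        moreover have "j mod (q - 1) < q - 1" using qm1 by simp
        ultimately show ?thesis by blast
      qed simp
    qed
    show "insert 0 ((\<lambda>j. \<gamma> ^ (S * j)) ` {..<q - 1}) \<subseteq> Rq"
      using Rq_in q2 unfolding Rq_def by (auto simp: power_0_left)
  qed
  have injS: "inj_on (\<lambda>j. \<gamma> ^ (S * j)) {..<q - 1}"
  proof (rule inj_onI)
    fix i j assume ij: "i \<in> {..<q - 1}" "j \<in> {..<q - 1}" "\<gamma> ^ (S * i) = \<gamma> ^ (S * j)"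
    hence "(S * i) mod N = (S * j) mod N" using peq by blast
    moreover have "S * i < S * (q - 1)" "S * j < S * (q - 1)" using ij Spos by auto
    moreover have "N = S * (q - 1)" using NS by simp
    ultimately have "S * i = S * j" by simp
    thus "i = j" using Spos by simp
  qed
  have "0 \<notin> (\<lambda>j. \<gamma> ^ (S * j)) ` {..<q - 1}" using \<gamma>nz by auto
  hence cRq: "card Rq = q" unfolding Rq_eq using injS q2 by (simp add: card_image)
  obtain \<phi> :: "'F \<Rightarrow> 'K" where hadd: "\<forall>x y. \<phi> (x + y) = \<phi> x + \<phi> y"
      and hmult: "\<forall>x y. \<phi> (x * y) = \<phi> x * \<phi> y" and hone: "\<phi> 1 = 1" and hinj: "inj \<phi>"
    using embed[OF assms(1) charF charK cF] cRq unfolding Rq_def by auto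
  have h0: "\<phi> 0 = 0" using hadd by (metis add_cancel_right_left add_0)
  have hdiff: "\<phi> (x - y) = \<phi> x - \<phi> y" for x y
    using hadd by (metis add_diff_cancel diff_add_cancel)
  have hpow: "\<phi> (x ^ n) = \<phi> x ^ n" for x n
    by (induction n) (auto simp: hone hmult)
  have hq: "\<phi> x ^ q = \<phi> x" for x
    using fermat_card[of x] cF hpow by metis
  have hqj: "\<phi> x ^ (q ^ j) = \<phi> x" for x j
  proof (induction j)
    case (Suc j)
    have "\<phi> x ^ (q ^ Suc j) = (\<phi> x ^ q) ^ (q ^ j)" by (simp add: power_mult)
    thus ?case using Suc hq by simp
  qed simp
  have hnz: "\<phi> x \<noteq> 0" if "x \<noteq> 0" for x
    using hinj h0 that by (metis injD)
  have "range \<phi> \<subseteq> Rq" unfolding Rq_def using hq by auto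
  moreover have "card (range \<phi>) = card Rq" using cRq cF hinj by (simp add: card_image)
  moreover have "finite Rq" by simp
  ultimately have rng: "range \<phi> = Rq" by (metis card_subset_eq)
  obtain \<alpha>0 where \<phi>\<alpha>0: "\<phi> \<alpha>0 = \<gamma> ^ S" using Rq_in[of 1] rng by auto
  define \<zeta> where "\<zeta> = \<gamma> ^ k'"
  have H1: "\<exists>i z. i < b \<and> y ^ k' = \<zeta> ^ i * \<phi> (z ^ k)" for y
  proof (cases "y = 0")
    case True
    thus ?thesis using k'pos kpos b2 h0 by (intro exI[of _ 0]) (auto simp: power_0_left)
  next
    case False
    then obtain n where n: "y = \<gamma> ^ n" using \<gamma>gen by blast
    define i where "i = n mod b"
    define t where "t = n div b"
    have nit: "n = i + b * t" unfolding i_def t_def by simp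
    have "\<zeta> ^ i * \<phi> ((\<alpha>0 ^ t) ^ k) = \<gamma> ^ (k' * i) * \<gamma> ^ (S * (t * k))"
      unfolding \<zeta>_def by (simp add: hpow \<phi>\<alpha>0 flip: power_mult)
    also have "S * (t * k) = b * k' * t" using mk by (metis mult.assoc mult.commute)
    also have "\<gamma> ^ (k' * i) * \<gamma> ^ (b * k' * t) = \<gamma> ^ (k' * i + b * k' * t)"
      by (simp add: power_add)
    also have "k' * i + b * k' * t = n * k'" using nit by (simp add: algebra_simps)
    finally have "y ^ k' = \<zeta> ^ i * \<phi> ((\<alpha>0 ^ t) ^ k)" using n by (simp add: power_mult)
    moreover have "i < b" using b2 unfolding i_def by simp
    ultimately show ?thesis by blast
  qed
  have H2: "\<exists>y. y ^ k' = \<zeta> ^ i * \<phi> (z ^ k)" for i z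
  proof (cases "z = 0")
    case True
    thus ?thesis using k'pos kpos h0 by (intro exI[of _ 0]) (auto simp: power_0_left)
  next
    case False
    hence "\<phi> z \<in> Rq" "\<phi> z \<noteq> 0" using rng hnz by auto
    then obtain j where j: "\<phi> z = \<gamma> ^ (S * j)" using Rq_char by blast
    have "\<zeta> ^ i * \<phi> (z ^ k) = \<gamma> ^ (k' * i) * \<gamma> ^ (S * j * k)"
      unfolding \<zeta>_def by (simp add: hpow j flip: power_mult)
    also have "S * j * k = b * k' * j" using mk by (metis mult.assoc mult.commute)
    also have "\<gamma> ^ (k' * i) * \<gamma> ^ (b * k' * j) = \<gamma> ^ ((i + b * j) * k')"
      by (simp add: power_add algebra_simps)
    finally show ?thesis by (metis power_mult)
  qed
  have zdist: "\<zeta> ^ (q ^ j) \<noteq> \<zeta> ^ (q ^ l)" if jl: "j < l" "l < b" for j l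
  proof
    assume eq: "\<zeta> ^ (q ^ j) = \<zeta> ^ (q ^ l)"
    hence "\<gamma> ^ (k' * q ^ j) = \<gamma> ^ (k' * q ^ l)" unfolding \<zeta>_def by (simp only: power_mult)
    hence "(k' * q ^ j) mod N = (k' * q ^ l) mod N" using peq by blast
    hence "(k' * q ^ j) mod (k' * (b * c)) = (k' * q ^ l) mod (k' * (b * c))" using k'bc by simp
    hence "k' * (q ^ j mod (b * c)) = k' * (q ^ l mod (b * c))" by (simp only: mod_mult_mult1)
    hence c1: "[q ^ j = q ^ l] (mod (b * c))" using k'pos by (simp add: cong_def)
    have "1 \<le> q ^ b" using q2 by simp
    hence c2: "[q ^ b = 1] (mod (b * c))" using bcN unfolding N_def by (simp add: cong_altdef_nat)
    have "[q = 1] (mod (b * c))" by (rule nt_order[OF assms(2) c2 jl c1])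
    hence "b * c dvd q - 1" using q2 by (simp add: cong_altdef_nat)
    then obtain t where t: "q - 1 = b * c * t" by blast
    hence "(q - 1) div c = b * t" using assms(5) by simp
    thus False using nbk by simp
  qed
  have LI: "\<forall>i<b. u i = 0" if sum0: "(\<Sum>i<b. \<zeta> ^ i * \<phi> (u i)) = 0" for u :: "nat \<Rightarrow> 'F"
  proof (rule ccontr)
    assume "\<not> (\<forall>i<b. u i = 0)"
    then obtain i0 where i0: "i0 < b" "u i0 \<noteq> 0" by blast
    define P :: "'K poly" where "P = (\<Sum>i<b. monom (\<phi> (u i)) i)"
    have coeffP: "coeff P n = (if n < b then \<phi> (u n) else 0)" for n
      unfolding P_def by (simp add: coeff_sum coeff_monom)
    have Pne: "P \<noteq> 0"
    proof
      assume "P = 0"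
      hence "coeff P i0 = 0" by simp
      thus False using coeffP i0 hnz by simp
    qed
    have degP: "degree P \<le> b - 1" by (rule degree_le) (auto simp: coeffP)
    have polyP: "poly P x = (\<Sum>i<b. \<phi> (u i) * x ^ i)" for x
      unfolding P_def by (simp add: poly_sum poly_monom)
    have roots: "poly P (\<zeta> ^ (q ^ j)) = 0" for j
    proof -
      have "(0::'K) = (\<Sum>i<b. \<zeta> ^ i * \<phi> (u i)) ^ (q ^ j)" using sum0 q2 by simp
      also have "\<dots> = (\<Sum>i<b. (\<zeta> ^ i * \<phi> (u i)) ^ (q ^ j))"
        by (rule freshmans_dream_sum'[where n = "a * j"]) (use charK assms(1) in \<open>auto simp: q_def power_mult\<close>)
      also have "\<dots> = (\<Sum>i<b. \<phi> (u i) * (\<zeta> ^ (q ^ j)) ^ i)"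
        by (intro sum.cong refl) (simp add: power_mult_distrib hqj mult.commute flip: power_mult)
      finally show ?thesis using polyP by simp
    qed
    have injz: "inj_on (\<lambda>j. \<zeta> ^ (q ^ j)) {..<b}"
    proof (rule inj_onI)
      fix j l assume jl: "j \<in> {..<b}" "l \<in> {..<b}" "\<zeta> ^ (q ^ j) = \<zeta> ^ (q ^ l)"
      show "j = l"
      proof (rule ccontr)
        assume "j \<noteq> l"
        hence "j < l \<or> l < j" by auto
        thus False using zdist jl by (metis lessThan_iff)
      qed
    qed
    have "(\<lambda>j. \<zeta> ^ (q ^ j)) ` {..<b} \<subseteq> {x. poly P x = 0}" using roots by auto
    hence "card ((\<lambda>j. \<zeta> ^ (q ^ j)) ` {..<b}) \<le> card {x. poly P x = 0}"
      by (rule card_mono[OF poly_roots_finite[OF Pne]])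
    also have "\<dots> \<le> degree P" by (rule card_poly_roots_bound[OF Pne])
    finally have "b \<le> b - 1" using injz degP by (simp add: card_image)
    thus False using b2 by simp
  qed
  define \<Phi> where "\<Phi> a = (\<Sum>i<b. \<zeta> ^ i * \<phi> (a i))" for a :: "nat \<Rightarrow> 'F"
  define A where "A = PiE {..<b} (\<lambda>_. (UNIV::'F set))"
  have injPhi: "inj_on \<Phi> A"
  proof (rule inj_onI)
    fix x y assume xy: "x \<in> A" "y \<in> A" "\<Phi> x = \<Phi> y"
    have "(\<Sum>i<b. \<zeta> ^ i * \<phi> (x i - y i)) = \<Phi> x - \<Phi> y"
      unfolding \<Phi>_def by (simp add: hdiff right_diff_distrib sum_subtractf)
    hence "(\<Sum>i<b. \<zeta> ^ i * \<phi> (x i - y i)) = 0" using xy(3) by simp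
    hence "\<forall>i<b. x i - y i = 0" by (rule LI)
    thus "x = y" using xy(1,2) unfolding A_def by (intro PiE_ext) auto
  qed
  have "card A = q ^ b" unfolding A_def by (simp add: card_PiE cF)
  hence "card (\<Phi> ` A) = card (UNIV::'K set)" using cK injPhi by (simp add: card_image)
  hence imA: "\<Phi> ` A = UNIV" by (metis card_subset_eq finite subset_UNIV)
  have SP: "\<exists>a::nat \<Rightarrow> 'F. y = (\<Sum>i<b. \<zeta> ^ i * \<phi> (a i))" for y
  proof -
    have "y \<in> \<Phi> ` A" using imA by simp
    thus ?thesis unfolding \<Phi>_def by blast
  qed
  have main: "waring_number k' TYPE('K) = map_option (\<lambda>s. b * s) (waring_number k TYPE('F))"
    by (rule waring_transfer[where \<phi> = \<phi> and \<zeta> = \<zeta>])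
       (use hadd h0 b2 kpos k'pos H1 H2 LI SP in auto)
  have "k' = (p ^ (a * b) - 1) div (b * c)" unfolding k'_def N_def q_def by (simp add: power_mult)
  moreover have "k = (p ^ a - 1) div c" unfolding k_def q_def by simp
  ultimately show ?thesis using main by simp
qed

end
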